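(* Let $0<\epsilon<0.5$, let $n\ge3$ and $\ell\ge3$ be integers, and let $\mathrm{ENC}_\epsilon:\mathbb{Z}_2^{n-1}\to\mathbb{Z}_2^n$ be an injective map all of whose images are $\epsilon$-balanced. Define the DNA code $$\mathcal{C}_{\ell,\epsilon}=\{\tau^{-1}(\boldsymbol{c}\|\boldsymbol{y}):\ \boldsymbol{c}\in f(\ell,n),\ \boldsymbol{y}=\mathrm{ENC}_\epsilon(\boldsymbol{x}),\ \boldsymbol{x}\in\mathbb{Z}_2^{n-1}\}\subseteq\Sigma_{\rm DNA}^n.$$ Then every codeword of $\mathcal{C}_{\ell,\epsilon}$ is TC-3-dominant (hence $3$-SSA), $\ell$-run-length limited and GC-$\epsilon$-balanced, and $|\mathcal{C}_{\ell,\epsilon}|=2^{n-1}|f(\ell,n)|$.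
   Context: $\Sigma_{\rm DNA}=\{\mathrm{A},\mathrm{T},\mathrm{C},\mathrm{G}\}$ with complement $\overline{\mathrm A}=\mathrm T$, $\overline{\mathrm T}=\mathrm A$, $\overline{\mathrm C}=\mathrm G$, $\overline{\mathrm G}=\mathrm C$; the reverse-complement of $(x_1,\dots,x_n)$ is $(\overline{x_n},\dots,\overline{x_1})$. A DNA sequence is $m$-SSA if it has no two non-overlapping blocks of consecutive symbols of length $\ge m$ that are reverse-complements of each other. A DNA sequence is TC-$m$-dominant if every block of $m$ consecutive symbols contains more than $m/2$ symbols from $\{\mathrm T,\mathrm C\}$; a binary sequence is "0"-$m$-dominant if every block of $m$ consecutive symbols contains more than $m/2$ zeros. A sequence is $\ell$-run-length limited if every maximal run of identical consecutive symbols has length at most $\ell$. $f(\ell,n)\subseteq\mathbb{Z}_2^n$ is the set of binary sequences of length $n$ that are "0"-3-dominant and $\ell$-run-length limited. A binary $\boldsymbol{d}\in\mathbb{Z}_2^n$ is $\epsilon$-balanced if $|\mathrm{wt}(\boldsymbol{d})/n-0.5|\le\epsilon$; a DNA sequence $\boldsymbol{x}$ of length $n$ is GC-$\epsilon$-balanced if $|\mathrm{wt}_{\rm GC}(\boldsymbol{x})/n-0.5|\le\epsilon$, where $\mathrm{wt}_{\rm GC}$ counts positions equal to G or C. $\tau(\mathrm T)=00$, $\tau(\mathrm C)=01$, $\tau(\mathrm A)=10$, $\tau(\mathrm G)=11$, extended symbolwise; $\boldsymbol{x}\|\boldsymbol{y}=(x_1y_1,\dots,x_ny_n)$. *)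

theory Defs
  imports Main "HOL.Real"
begin

datatype dna = A | T | C | G

fun comp :: "dna \<Rightarrow> dna" where
  "comp A = T" | "comp T = A" | "comp C = G" | "comp G = C"

definition revcomp :: "dna list \<Rightarrow> dna list" where
  "revcomp xs = rev (map comp xs)"

definition block :: "nat \<Rightarrow> nat \<Rightarrow> 'a list \<Rightarrow> 'a list" where
  "block i k xs = take k (drop i xs)"

definition SSA :: "nat \<Rightarrow> dna list \<Rightarrow> bool" where
  "SSA m xs \<longleftrightarrow> \<not> (\<exists>i j k. m \<le> k \<and> i + k \<le> j \<and> j + k \<le> length xs \<and>
       block j k xs = revcomp (block i k xs))"

definition TC_dominant :: "nat \<Rightarrow> dna list \<Rightarrow> bool" where
  "TC_dominant m xs \<longleftrightarrow> (\<forall>i. i + m \<le> length xs \<longrightarrow>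
     2 * length (filter (\<lambda>s. s = T \<or> s = C) (block i m xs)) > m)"

text \<open>Binary sequences are bool lists; False = 0, True = 1.\<close>
definition zero_dominant :: "nat \<Rightarrow> bool list \<Rightarrow> bool" where
  "zero_dominant m xs \<longleftrightarrow> (\<forall>i. i + m \<le> length xs \<longrightarrow>
     2 * length (filter (\<lambda>b. \<not> b) (block i m xs)) > m)"

definition rll :: "nat \<Rightarrow> 'a list \<Rightarrow> bool" where
  "rll l xs \<longleftrightarrow> (\<forall>i k. i + k \<le> length xs \<and> 0 < k
      \<and> (\<forall>j. i \<le> j \<and> j < i + k \<longrightarrow> xs ! j = xs ! i)
      \<and> (i = 0 \<or> xs ! (i - 1) \<noteq> xs ! i)
      \<and> (i + k = length xs \<or> xs ! (i + k) \<noteq> xs ! i)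
      \<longrightarrow> k \<le> l)"

definition f_set :: "nat \<Rightarrow> nat \<Rightarrow> bool list set" where
  "f_set l n = {c. length c = n \<and> zero_dominant 3 c \<and> rll l c}"

definition wt :: "bool list \<Rightarrow> nat" where
  "wt d = length (filter id d)"

definition eps_balanced :: "real \<Rightarrow> bool list \<Rightarrow> bool" where
  "eps_balanced \<epsilon> d \<longleftrightarrow> \<bar>real (wt d) / real (length d) - 1/2\<bar> \<le> \<epsilon>"

definition wt_GC :: "dna list \<Rightarrow> nat" where
  "wt_GC x = length (filter (\<lambda>s. s = G \<or> s = C) x)"

definition GC_balanced :: "real \<Rightarrow> dna list \<Rightarrow> bool" where
  "GC_balanced \<epsilon> x \<longleftrightarrow> \<bar>real (wt_GC x) / real (length x) - 1/2\<bar> \<le> \<epsilon>"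

fun tau :: "dna \<Rightarrow> bool \<times> bool" where
  "tau T = (False, False)" | "tau C = (False, True)"
| "tau A = (True, False)" | "tau G = (True, True)"

text \<open>tau^{-1}(c || y), the symbolwise inverse of tau on interleaved pairs.\<close>
definition tau_inv_seq :: "bool list \<Rightarrow> bool list \<Rightarrow> dna list" where
  "tau_inv_seq c y = map (inv tau) (zip c y)"

definition code :: "nat \<Rightarrow> nat \<Rightarrow> (bool list \<Rightarrow> bool list) \<Rightarrow> dna list set" where
  "code l n ENC = {tau_inv_seq c (ENC x) | c x. c \<in> f_set l n \<and> length x = n - 1}"

end

theory Submission
  imports Defs
begin

lemma surj_tau: "surj tau"
proof -
  have "\<And>p. p \<in> range tau"
  proof -
    fix p :: "bool \<times> bool"
    obtain a b where p: "p = (a,b)" by (cases p)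
    show "p \<in> range tau"
      by (cases a; cases b) (auto simp: p intro: range_eqI[of _ _ T] range_eqI[of _ _ C]
            range_eqI[of _ _ A] range_eqI[of _ _ G])
  qed
  thus ?thesis by auto
qed

lemma tau_inv: "tau (inv tau p) = p"
  using surj_tau by (simp add: surj_f_inv_f)

lemma inv_tau_eq: "inv tau p = inv tau q \<longleftrightarrow> p = q"
  by (metis tau_inv)

lemma TC_fst: "(d = T \<or> d = C) \<longleftrightarrow> \<not> fst (tau d)"
  by (cases d) auto

lemma GC_snd: "(d = G \<or> d = C) \<longleftrightarrow> snd (tau d)"
  by (cases d) auto

lemma filter_zip_fst:
  "length a = length b \<Longrightarrow> (\<forall>p. P (g p) \<longleftrightarrow> Q (fst p)) \<Longrightarrow>
   length (filter P (map g (zip a b))) = length (filter Q a)"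
  by (induction a b rule: list_induct2) auto

lemma filter_zip_snd:
  "length a = length b \<Longrightarrow> (\<forall>p. P (g p) \<longleftrightarrow> Q (snd p)) \<Longrightarrow>
   length (filter P (map g (zip a b))) = length (filter Q b)"
  by (induction a b rule: list_induct2) auto

lemma rll_seg0:
  assumes R: "rll l xs"
  shows "\<And>i k. length xs - k = d \<Longrightarrow> i + k \<le> length xs \<Longrightarrow> 0 < k \<Longrightarrow>
    (\<forall>j. i \<le> j \<and> j < i + k \<longrightarrow> xs ! j = xs ! i) \<Longrightarrow> k \<le> l"
proof (induction d rule: less_induct)
  case (less d i k)
  note IH = less(1) and hd = less(2) and hle = less(3) and hk = less(4) and hc = less(5)
  consider (L) "i \<noteq> 0" "xs ! (i - 1) = xs ! i"
    | (Rt) "i + k \<noteq> length xs" "xs ! (i + k) = xs ! i"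
    | (M) "i = 0 \<or> xs ! (i - 1) \<noteq> xs ! i" "i + k = length xs \<or> xs ! (i + k) \<noteq> xs ! i"
    by (metis (no_types))
  then show ?case
  proof cases
    case L
    have c2: "\<forall>j. i - 1 \<le> j \<and> j < i - 1 + (k + 1) \<longrightarrow> xs ! j = xs ! (i - 1)"
    proof (intro allI impI)
      fix j assume j: "i - 1 \<le> j \<and> j < i - 1 + (k + 1)"
      show "xs ! j = xs ! (i - 1)"
      proof (cases "j = i - 1")
        case False
        then have "i \<le> j \<and> j < i + k" using j L(1) by linarith
        then have "xs ! j = xs ! i" using hc by blast
        then show ?thesis using L(2) by simp
      qed simp
    qed
    have "k + 1 \<le> l"
      by (rule IH[where y="length xs - (k+1)" and i="i - 1" and k="k + 1"]) (use hd hle L(1) in linarith, use hd hle L(1) in linarith, use hd hle L(1) in linarith, simp, rule c2)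
    then show ?thesis by simp
  next
    case Rt
    have c2: "\<forall>j. i \<le> j \<and> j < i + (k + 1) \<longrightarrow> xs ! j = xs ! i"
    proof (intro allI impI)
      fix j assume j: "i \<le> j \<and> j < i + (k + 1)"
      show "xs ! j = xs ! i"
      proof (cases "j = i + k")
        case False
        then have "i \<le> j \<and> j < i + k" using j by linarith
        then show ?thesis using hc by blast
      qed (use Rt(2) in simp)
    qed
    have "k + 1 \<le> l"
      by (rule IH[where y="length xs - (k+1)" and i=i and k="k + 1"]) (use hd hle Rt(1) in linarith, use hd hle Rt(1) in linarith, use hd hle Rt(1) in linarith, simp, rule c2)
    then show ?thesis by simp
  next
    case M
    have r: "i + k \<le> length xs \<and> 0 < k
      \<and> (\<forall>j. i \<le> j \<and> j < i + k \<longrightarrow> xs ! j = xs ! i)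
      \<and> (i = 0 \<or> xs ! (i - 1) \<noteq> xs ! i)
      \<and> (i + k = length xs \<or> xs ! (i + k) \<noteq> xs ! i)
      \<longrightarrow> k \<le> l"
      by (rule spec[OF spec[OF R[unfolded rll_def]]])
    show ?thesis by (rule mp[OF r], intro conjI, fact hle, fact hk, fact hc, fact M(1), fact M(2))
  qed
qed
lemma rll_seg:
  assumes "rll l xs" "i + k \<le> length xs" "0 < k"
    "\<forall>j. i \<le> j \<and> j < i + k \<longrightarrow> xs ! j = xs ! i"
  shows "k \<le> l"
  by (rule rll_seg0[OF assms(1) refl assms(2-4)])

lemma block3: "i + 3 \<le> length xs \<Longrightarrow> block i 3 xs = [xs!i, xs!(i+1), xs!(i+2)]"
  unfolding block_def
  by (simp add: take_Suc_conv_app_nth numeral_3_eq_3 nth_drop)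

lemma TC3_iff:
  "TC_dominant 3 w \<longleftrightarrow> (\<forall>i. i + 3 \<le> length w \<longrightarrow>
     2 * length (filter (\<lambda>s. s = T \<or> s = C) [w!i, w!(i+1), w!(i+2)]) > 3)"
  unfolding TC_dominant_def by (simp add: block3)

lemma three_contra:
  "3 < 2 * length (filter (\<lambda>s. s = T \<or> s = C) [comp r, comp q, comp p]) \<Longrightarrow>
   3 < 2 * length (filter (\<lambda>s. s = T \<or> s = C) [p, q, r]) \<Longrightarrow> False"
  by (cases p; cases q; cases r) auto

lemma TC_SSA:
  assumes "TC_dominant 3 w"
  shows "SSA 3 w"
  unfolding SSA_def
proof
  assume "\<exists>i j k. 3 \<le> k \<and> i + k \<le> j \<and> j + k \<le> length w \<and> block j k w = revcomp (block i k w)"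
  then obtain i j k where h: "3 \<le> k" "i + k \<le> j" "j + k \<le> length w"
      "block j k w = revcomp (block i k w)" by blast
  have nth: "w ! (j + t) = comp (w ! (i + k - 1 - t))" if "t < k" for t
  proof -
    have "block j k w ! t = w ! (j + t)" using that h(1-3) by (simp add: block_def)
    moreover have "revcomp (block i k w) ! t = comp (w ! (i + k - 1 - t))"
      using that h(1-3) unfolding revcomp_def block_def
      by (simp add: rev_nth min_def)
    ultimately show ?thesis using h(4) by simp
  qed
  have c: "(comp d = T \<or> comp d = C) \<longleftrightarrow> \<not> (d = T \<or> d = C)" for d by (cases d) auto
  have a1: "2 * length (filter (\<lambda>s. s = T \<or> s = C) [w!j, w!(j+1), w!(j+2)]) > 3"
    using assms h(1-3) unfolding TC3_iff by simp
  have a2: "2 * length (filter (\<lambda>s. s = T \<or> s = C)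
        [w!(i+k-3), w!(i+k-3+1), w!(i+k-3+2)]) > 3"
    using assms h(1-3) unfolding TC3_iff by simp
  have e0: "w!j = comp (w!(i+k-3+2))"
  proof - have "i+k-3+2 = i+k-1-0" using h(1) by arith
    thus ?thesis using nth[of 0] h(1) by simp qed
  have e1: "w!(j+1) = comp (w!(i+k-3+1))"
  proof - have "i+k-3+1 = i+k-1-1" using h(1) by arith
    thus ?thesis using nth[of 1] h(1) by simp qed
  have e2: "w!(j+2) = comp (w!(i+k-3))"
  proof - have "i+k-3 = i+k-1-2" using h(1) by arith
    thus ?thesis using nth[of 2] h(1) by simp qed
  show False using a1 a2 unfolding e0 e1 e2 by (rule three_contra)
qed

lemma len_tis: "length (tau_inv_seq c y) = min (length c) (length y)"
  by (simp add: tau_inv_seq_def)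

lemma nth_tis: "j < length c \<Longrightarrow> j < length y \<Longrightarrow> tau ((tau_inv_seq c y) ! j) = (c ! j, y ! j)"
  by (simp add: tau_inv_seq_def tau_inv)

lemma block_tis: "block i m (tau_inv_seq c y) = tau_inv_seq (block i m c) (block i m y)"
  by (simp add: tau_inv_seq_def block_def drop_map take_map drop_zip take_zip)

lemma map_tau_tis: "map tau (tau_inv_seq c y) = zip c y"
  by (simp add: tau_inv_seq_def comp_def tau_inv)

theorem theorem1:
  fixes \<epsilon> :: real and n l :: nat and ENC :: "bool list \<Rightarrow> bool list"
  assumes "0 < \<epsilon>" and "\<epsilon> < 1/2" and "n \<ge> 3" and "l \<ge> 3"
    and "\<forall>x. length x = n - 1 \<longrightarrow> length (ENC x) = n"
    and "inj_on ENC {x. length x = n - 1}"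
    and "\<forall>x. length x = n - 1 \<longrightarrow> eps_balanced \<epsilon> (ENC x)"
  shows "(\<forall>w \<in> code l n ENC. TC_dominant 3 w \<and> SSA 3 w \<and> rll l w \<and> GC_balanced \<epsilon> w)
         \<and> card (code l n ENC) = 2 ^ (n - 1) * card (f_set l n)"
proof
  show "\<forall>w \<in> code l n ENC. TC_dominant 3 w \<and> SSA 3 w \<and> rll l w \<and> GC_balanced \<epsilon> w"
  proof
    fix w assume "w \<in> code l n ENC"
    then obtain c x where w: "w = tau_inv_seq c (ENC x)" and c: "c \<in> f_set l n"
      and x: "length x = n - 1" unfolding code_def by blast
    let ?y = "ENC x"
    have ly: "length ?y = n" using assms(5) x by auto
    have lc: "length c = n" and zd: "zero_dominant 3 c" and rc: "rll l c"
      using c by (auto simp: f_set_def)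
    have lw: "length w = n" using w ly lc by (simp add: len_tis)
    have TC: "TC_dominant 3 w"
      unfolding TC_dominant_def
    proof (intro allI impI)
      fix i assume i: "i + 3 \<le> length w"
      have "length (filter (\<lambda>s. s = T \<or> s = C) (block i 3 w))
          = length (filter (\<lambda>b. \<not> b) (block i 3 c))"
        unfolding w block_tis unfolding tau_inv_seq_def
        by (rule filter_zip_fst) (use lc ly in \<open>auto simp: block_def TC_fst tau_inv\<close>)
      thus "3 < 2 * length (filter (\<lambda>s. s = T \<or> s = C) (block i 3 w))"
        using zd i lw lc unfolding zero_dominant_def by auto
    qed
    have R: "rll l w"
      unfolding rll_def
    proof (intro allI impI)
      fix i k assume h: "i + k \<le> length w \<and> 0 < k
      \<and> (\<forall>j. i \<le> j \<and> j < i + k \<longrightarrow> w ! j = w ! i)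
      \<and> (i = 0 \<or> w ! (i - 1) \<noteq> w ! i)
      \<and> (i + k = length w \<or> w ! (i + k) \<noteq> w ! i)"
      have hw: "\<forall>j. i \<le> j \<and> j < i + k \<longrightarrow> w ! j = w ! i" using h by blast
      have cc: "\<forall>j. i \<le> j \<and> j < i + k \<longrightarrow> c ! j = c ! i"
      proof (intro allI impI)
        fix j assume j: "i \<le> j \<and> j < i + k"
        have wj: "w ! j = w ! i" using hw j by blast
        have jl: "j < n" "i < n" using h j lw by linarith+
        have "(c ! j, ?y ! j) = (c ! i, ?y ! i)"
          using nth_tis[of j c ?y] nth_tis[of i c ?y] jl lc ly wj unfolding w by metis
        thus "c ! j = c ! i" by simp
      qed
      have "i + k \<le> length c" "0 < k" using h lw lc by linarith+
      thus "k \<le> l" using rll_seg[OF rc _ _ cc] by blast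
    qed
    have wg: "wt_GC w = wt ?y"
      unfolding wt_GC_def wt_def w tau_inv_seq_def
      by (rule filter_zip_snd) (use lc ly in \<open>auto simp: GC_snd tau_inv\<close>)
    have GB: "GC_balanced \<epsilon> w"
    proof -
      have "eps_balanced \<epsilon> ?y" using assms(7) x by blast
      thus ?thesis using wg lw ly unfolding GC_balanced_def eps_balanced_def by simp
    qed
    show "TC_dominant 3 w \<and> SSA 3 w \<and> rll l w \<and> GC_balanced \<epsilon> w"
      using TC TC_SSA R GB by blast
  qed
next
  let ?X = "{x :: bool list. length x = n - 1}"
  let ?g = "\<lambda>(c, x). tau_inv_seq c (ENC x)"
  have eq: "code l n ENC = ?g ` (f_set l n \<times> ?X)"
    unfolding code_def by auto
  have inj: "inj_on ?g (f_set l n \<times> ?X)"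
  proof (rule inj_onI, clarify)
    fix c x c' x'
    assume h: "c \<in> f_set l n" "length x = n - 1" "c' \<in> f_set l n" "length x' = n - 1"
      "tau_inv_seq c (ENC x) = tau_inv_seq c' (ENC x')"
    have "zip c (ENC x) = zip c' (ENC x')" using h(5) by (metis map_tau_tis)
    moreover have "length c = n" "length c' = n" "length (ENC x) = n" "length (ENC x') = n"
      using h assms(5) by (auto simp: f_set_def)
    ultimately have "c = c'" "ENC x = ENC x'" by (auto simp: zip_eq_conv)
    thus "c = c' \<and> x = x'" using assms(6) h by (auto dest: inj_onD)
  qed
  have cX: "card ?X = 2 ^ (n - 1)"
    using card_lists_length_eq[of "UNIV :: bool set" "n - 1"] by simp
  show "card (code l n ENC) = 2 ^ (n - 1) * card (f_set l n)"
    unfolding eq card_image[OF inj] card_cartesian_product cX by simp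
qed

end
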